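(* Let $\gamma\in(1,3)$, $\mu\in(0,1)$, $K>0$, $U_D=\frac{2}{3-\gamma}$ and \[ y_D=-K\frac{\big(U_D-\frac{2\mu}{\gamma+1}\big)^{\frac1\mu-1}}{U_D^{\frac1\mu}}<0. \] Define $U^{\mathrm{sp}}=U^{\mathrm{sp}}(y)$ for $y_D<y<0$ by \[ y=-K\frac{\big(U^{\mathrm{sp}}-\frac{2\mu}{\gamma+1}\big)^{\frac1\mu-1}}{(U^{\mathrm{sp}})^{\frac1\mu}},\qquad y_D<y<0,\ U^{\mathrm{sp}}>U_D. \] Then $U^{\mathrm{sp}}$ solves \[ y\frac{dU}{dy}=-\frac{[(\gamma+1)U-2\mu]U}{(\gamma+1)U-2}, \] satisfies $\lim_{y\to0^-}yU^{\mathrm{sp}}(y)=-K$, and $\frac{2}{3-\gamma}=U_D<U^{\mathrm{sp}}<\infty$. *)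

theory Defs
  imports "HOL-Analysis.Analysis"
begin

definition Yfun :: "real \<Rightarrow> real \<Rightarrow> real \<Rightarrow> real \<Rightarrow> real" where
  "Yfun \<gamma> \<mu> K U = - K * (U - 2 * \<mu> / (\<gamma> + 1)) powr (1 / \<mu> - 1) / U powr (1 / \<mu>)"

definition U_D :: "real \<Rightarrow> real" where
  "U_D \<gamma> = 2 / (3 - \<gamma>)"

definition y_D :: "real \<Rightarrow> real \<Rightarrow> real \<Rightarrow> real" where
  "y_D \<gamma> \<mu> K = Yfun \<gamma> \<mu> K (U_D \<gamma>)"

definition Usp :: "real \<Rightarrow> real \<Rightarrow> real \<Rightarrow> real \<Rightarrow> real" where
  "Usp \<gamma> \<mu> K y = (THE U. U > U_D \<gamma> \<and> y = Yfun \<gamma> \<mu> K U)"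

end

theory Submission
  imports Defs "HOL-Real_Asymp.Real_Asymp"
begin

lemma Y_exp:
  assumes "0 < \<mu>" "1 < \<gamma>" "0 < K" "U > 2*\<mu>/(\<gamma>+1)"
  shows "Yfun \<gamma> \<mu> K U = - exp (ln K + (1/\<mu> - 1) * ln (U - 2*\<mu>/(\<gamma>+1)) - (1/\<mu>) * ln U)"
proof -
  have "2*\<mu>/(\<gamma>+1) > 0" using assms by simp
  hence "U > 0" "U - 2*\<mu>/(\<gamma>+1) > 0" using assms by linarith+
  thus ?thesis using assms unfolding Yfun_def powr_def
    by (simp add: exp_diff exp_add)
qed

lemma Y_neg:
  assumes "0 < \<mu>" "1 < \<gamma>" "0 < K" "U > 2*\<mu>/(\<gamma>+1)"
  shows "Yfun \<gamma> \<mu> K U < 0"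
  using Y_exp[OF assms] by simp

lemma Y_deriv:
  assumes "0 < \<mu>" "1 < \<gamma>" "0 < K" "U > 2*\<mu>/(\<gamma>+1)"
  shows "(Yfun \<gamma> \<mu> K has_real_derivative
     Yfun \<gamma> \<mu> K U * ((1/\<mu>-1)/(U - 2*\<mu>/(\<gamma>+1)) - (1/\<mu>)/U)) (at U)"
proof -
  define a where "a = 2*\<mu>/(\<gamma>+1)"
  have a0: "a > 0" using assms by (simp add: a_def)
  have Ua0: "U > a" using assms by (simp add: a_def)
  hence Ua: "U > a" "U > 0" "U - a > 0" using a0 by linarith+
  have "((\<lambda>U. - exp (ln K + (1/\<mu> - 1) * ln (U - a) - (1/\<mu>) * ln U)) has_real_derivative
     (- exp (ln K + (1/\<mu> - 1) * ln (U - a) - (1/\<mu>) * ln U)) * (0 + (1/\<mu> - 1) * (1/(U-a)) - (1/\<mu>) * (1/U))) (at U)"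
    using Ua assms(1) by (auto intro!: derivative_eq_intros)
  hence d: "((\<lambda>U. - exp (ln K + (1/\<mu> - 1) * ln (U - a) - (1/\<mu>) * ln U)) has_real_derivative
     Yfun \<gamma> \<mu> K U * ((1/\<mu>-1)/(U - a) - (1/\<mu>)/U)) (at U)"
    using Y_exp[OF assms] by (simp add: a_def)
  have e: "\<And>x. x \<in> {a<..} \<Longrightarrow> - exp (ln K + (1/\<mu> - 1) * ln (x - a) - (1/\<mu>) * ln x) = Yfun \<gamma> \<mu> K x"
    using Y_exp[OF assms(1-3)] by (simp add: a_def)
  have "(Yfun \<gamma> \<mu> K has_real_derivative Yfun \<gamma> \<mu> K U * ((1/\<mu>-1)/(U - a) - (1/\<mu>)/U)) (at U)"
    by (rule has_field_derivative_transform_within_open[OF d, of "{a<..}"]) (use Ua e in auto)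
  thus ?thesis by (simp add: a_def)
qed

lemma bracket_neg:
  fixes \<gamma> \<mu> U :: real
  assumes "0 < \<mu>" "\<mu> < 1" "1 < \<gamma>" "U > 2/(\<gamma>+1)"
  shows "(1/\<mu>-1)/(U - 2*\<mu>/(\<gamma>+1)) - (1/\<mu>)/U < 0"
proof -
  define a where "a = 2*\<mu>/(\<gamma>+1)"
  have ac: "a < 2/(\<gamma>+1)" using assms by (simp add: a_def divide_strict_right_mono)
  have a0: "a > 0" using assms by (simp add: a_def)
  have U: "U > a" "U > 0" "U - a > 0" using ac a0 assms(4) by linarith+
  have eq: "(1/\<mu>-1)/(U - a) - (1/\<mu>)/U = (a/\<mu> - U)/(U*(U-a))"
    using U assms(1) by (simp add: field_simps)
  have "a/\<mu> = 2/(\<gamma>+1)" using assms by (simp add: a_def)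
  hence "a/\<mu> - U < 0" using assms(4) by simp
  hence "(a/\<mu> - U)/(U*(U-a)) < 0" using U by (simp add: divide_neg_pos)
  thus ?thesis using eq by (simp add: a_def)
qed

lemma Y_deriv_pos:
  assumes "0 < \<mu>" "\<mu> < 1" "1 < \<gamma>" "0 < K" "U > 2/(\<gamma>+1)"
  shows "\<exists>D. (Yfun \<gamma> \<mu> K has_real_derivative D) (at U) \<and> D > 0"
proof -
  have ac: "2*\<mu>/(\<gamma>+1) < 2/(\<gamma>+1)" using assms by (simp add: divide_strict_right_mono)
  hence Ua: "U > 2*\<mu>/(\<gamma>+1)" using assms by linarith
  show ?thesis
    using Y_deriv[OF assms(1,3,4) Ua] Y_neg[OF assms(1,3,4) Ua] bracket_neg[OF assms(1,2,3,5)]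
    by (intro exI conjI) (auto intro: mult_neg_neg)
qed

lemma UD_gt:
  assumes "1 < \<gamma>" "\<gamma> < 3"
  shows "U_D \<gamma> > 2/(\<gamma>+1)"
  using assms unfolding U_D_def by (simp add: frac_less2)

lemma Y_mono:
  assumes "0 < \<mu>" "\<mu> < 1" "1 < \<gamma>" "\<gamma> < 3" "0 < K" "U_D \<gamma> \<le> u" "u < v"
  shows "Yfun \<gamma> \<mu> K u < Yfun \<gamma> \<mu> K v"
  apply (rule DERIV_pos_imp_increasing[OF assms(7)])
  using Y_deriv_pos[OF assms(1,2,3,5)] UD_gt[OF assms(3,4)] assms(6) by force

lemma Y_times_U:
  assumes "0 < \<mu>" "1 < \<gamma>" "0 < K"
  shows "((\<lambda>U. Yfun \<gamma> \<mu> K U * U) \<longlongrightarrow> -K) at_top"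
proof -
  define a where "a = 2*\<mu>/(\<gamma>+1)"
  have a0: "a > 0" using assms by (simp add: a_def)
  have ev: "eventually (\<lambda>U. -K * (1 - a/U) powr (1/\<mu>-1) = Yfun \<gamma> \<mu> K U * U) at_top"
    using eventually_gt_at_top[of a]
  proof eventually_elim
    case (elim U)
    hence U: "U > 0" "U - a > 0" using a0 by linarith+
    have "U powr (1/\<mu>-1) * U powr 1 = U powr (1/\<mu>-1+1)"
      by (rule powr_add[symmetric])
    hence "U powr (1/\<mu>) = U powr (1/\<mu>-1) * U"
      using U by simp
    moreover have "(1 - a/U) = (U-a)/U" using U by (simp add: field_simps)
    ultimately show ?case using U unfolding Yfun_def a_def[symmetric]
      by (simp add: powr_divide)
  qed
  have "((\<lambda>U. 1 - a/U) \<longlongrightarrow> 1) at_top"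
    by real_asymp
  hence "((\<lambda>U. -K * (1 - a/U) powr (1/\<mu>-1)) \<longlongrightarrow> -K * 1 powr (1/\<mu>-1)) at_top"
    by (intro tendsto_intros) auto
  hence "((\<lambda>U. -K * (1 - a/U) powr (1/\<mu>-1)) \<longlongrightarrow> -K) at_top" by simp
  thus ?thesis using ev by (rule Lim_transform_eventually)
qed

theorem lemma3p9:
  fixes \<gamma> \<mu> K :: real
  assumes "1 < \<gamma>" "\<gamma> < 3" "0 < \<mu>" "\<mu> < 1" "0 < K"
  shows "y_D \<gamma> \<mu> K < 0 \<and>
    (\<forall>y. y_D \<gamma> \<mu> K < y \<and> y < 0 \<longrightarrow> (\<exists>!U. U > U_D \<gamma> \<and> y = Yfun \<gamma> \<mu> K U))\<and>
    (\<forall>y. y_D \<gamma> \<mu> K < y \<and> y < 0 \<longrightarrow>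
           (\<exists>D. (Usp \<gamma> \<mu> K has_real_derivative D) (at y) \<and>
                y * D = - (((\<gamma> + 1) * Usp \<gamma> \<mu> K y - 2 * \<mu>) * Usp \<gamma> \<mu> K y)
                         / ((\<gamma> + 1) * Usp \<gamma> \<mu> K y - 2))) \<and>
    ((\<lambda>y. y * Usp \<gamma> \<mu> K y) \<longlongrightarrow> - K) (at_left 0) \<and>
    (\<forall>y. y_D \<gamma> \<mu> K < y \<and> y < 0 \<longrightarrow> U_D \<gamma> < Usp \<gamma> \<mu> K y)"
proof -
  define Y where "Y = Yfun \<gamma> \<mu> K"
  define UD where "UD = U_D \<gamma>"
  define a where "a = 2*\<mu>/(\<gamma>+1)"
  have ac: "a < 2/(\<gamma>+1)" using assms by (simp add: a_def divide_strict_right_mono)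
  have a0: "a > 0" using assms by (simp add: a_def)
  have UDc: "UD > 2/(\<gamma>+1)" using UD_gt[OF assms(1,2)] by (simp add: UD_def)
  have UDa: "UD > a" using UDc ac by linarith
  have neg: "\<And>U. U > a \<Longrightarrow> Y U < 0"
    using Y_neg[OF assms(3,1,5)] by (simp add: Y_def a_def)
  have mono: "\<And>u v. UD \<le> u \<Longrightarrow> u < v \<Longrightarrow> Y u < Y v"
    using Y_mono[OF assms(3,4,1,2,5)] by (simp add: Y_def UD_def)
  have monole: "\<And>u v. UD \<le> u \<Longrightarrow> UD \<le> v \<Longrightarrow> Y u < Y v \<Longrightarrow> u < v"
  proof -
    fix u v assume h: "UD \<le> u" "UD \<le> v" "Y u < Y v"
    show "u < v"
    proof (rule ccontr)
      assume "\<not> u < v"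
      hence "v < u \<or> v = u" by linarith
      thus False using mono[of v u] h by auto
    qed
  qed
  have yD: "y_D \<gamma> \<mu> K = Y UD" by (simp add: y_D_def Y_def UD_def)
  have dpos: "\<And>U. U > 2/(\<gamma>+1) \<Longrightarrow> \<exists>D. (Y has_real_derivative D) (at U) \<and> D > 0"
    using Y_deriv_pos[OF assms(3,4,1,5)] by (simp add: Y_def)
  have cont: "\<And>U. U \<ge> UD \<Longrightarrow> isCont Y U"
  proof -
    fix U assume "U \<ge> UD"
    hence "U > 2/(\<gamma>+1)" using UDc by linarith
    then obtain D where "(Y has_real_derivative D) (at U)" using dpos by blast
    thus "isCont Y U" by (rule DERIV_isCont)
  qed
  have lim1: "((\<lambda>U. Y U * U) \<longlongrightarrow> -K) at_top"
    using Y_times_U[OF assms(3,1,5)] by (simp add: Y_def)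
  have lim0: "(Y \<longlongrightarrow> 0) at_top"
  proof -
    have "((\<lambda>U. (Y U * U) * (1/U)) \<longlongrightarrow> -K * 0) at_top"
      by (intro tendsto_intros lim1) real_asymp
    moreover have "eventually (\<lambda>U. (Y U * U) * (1/U) = Y U) at_top"
      using eventually_gt_at_top[of 0] by eventually_elim simp
    ultimately show ?thesis by (simp add: Lim_transform_eventually)
  qed
  have exU: "\<exists>U. U > UD \<and> y = Y U" if y: "Y UD < y" "y < 0" for y
  proof -
    have "eventually (\<lambda>U. Y U > y) at_top"
      using lim0 y(2) by (simp add: order_tendstoD(1))
    moreover have "eventually (\<lambda>U. U > UD) at_top" by (rule eventually_gt_at_top)
    ultimately have "eventually (\<lambda>U. Y U > y \<and> U > UD) at_top" by eventually_elim simp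
    then obtain N where N: "\<forall>n\<ge>N. Y n > y \<and> n > UD" by (auto simp: eventually_at_top_linorder)
    obtain M where M: "Y M > y" "M > UD" using N by blast
    obtain U where U: "UD \<le> U" "U \<le> M" "Y U = y"
      using IVT[of Y UD y M] M y cont by fastforce
    hence "U \<noteq> UD" using y by auto
    thus ?thesis using U by (intro exI[of _ U]) auto
  qed
  have uniq: "\<And>U V. U > UD \<Longrightarrow> V > UD \<Longrightarrow> Y U = Y V \<Longrightarrow> U = V"
  proof -
    fix U V assume h: "U > UD" "V > UD" "Y U = Y V"
    show "U = V"
    proof (rule ccontr)
      assume "U \<noteq> V"
      hence "U < V \<or> V < U" by linarith
      thus False using mono[of U V] mono[of V U] h by auto
    qed
  qed
  have UspY: "Usp \<gamma> \<mu> K (Y U) = U" if "U > UD" for U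
    unfolding Usp_def Y_def[symmetric] UD_def[symmetric]
    by (rule the_equality) (use that uniq in auto)
  have Usp_prop: "Usp \<gamma> \<mu> K y > UD \<and> Y (Usp \<gamma> \<mu> K y) = y" if "Y UD < y" "y < 0" for y
    using exU[OF that] UspY by auto
  have P1: "y_D \<gamma> \<mu> K < 0" using neg[OF UDa] yD by simp
  have P2: "\<forall>y. y_D \<gamma> \<mu> K < y \<and> y < 0 \<longrightarrow> (\<exists>!U. U > U_D \<gamma> \<and> y = Yfun \<gamma> \<mu> K U)"
    unfolding yD Y_def[symmetric] UD_def[symmetric] using exU uniq by blast
  have P5: "\<forall>y. y_D \<gamma> \<mu> K < y \<and> y < 0 \<longrightarrow> U_D \<gamma> < Usp \<gamma> \<mu> K y"
    using Usp_prop unfolding yD UD_def by blast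
  have P3: "\<forall>y. y_D \<gamma> \<mu> K < y \<and> y < 0 \<longrightarrow>
           (\<exists>D. (Usp \<gamma> \<mu> K has_real_derivative D) (at y) \<and>
                y * D = - (((\<gamma> + 1) * Usp \<gamma> \<mu> K y - 2 * \<mu>) * Usp \<gamma> \<mu> K y)
                         / ((\<gamma> + 1) * Usp \<gamma> \<mu> K y - 2))"
  proof (intro allI impI)
    fix y assume "y_D \<gamma> \<mu> K < y \<and> y < 0"
    hence y: "Y UD < y" "y < 0" using yD by auto
    define U where "U = Usp \<gamma> \<mu> K y"
    have U: "U > UD" "Y U = y" using Usp_prop[OF y] by (auto simp: U_def)
    have Uc: "U > 2/(\<gamma>+1)" using U UDc by linarith
    have Ua: "U > a" "U > 0" "U - a > 0" using Uc ac a0 by linarith+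
    have dY: "(Y has_real_derivative Y U * ((1/\<mu>-1)/(U - a) - (1/\<mu>)/U)) (at U)"
      using Y_deriv[OF assms(3,1,5)] Ua by (simp add: Y_def a_def)
    define B where "B = (1/\<mu>-1)/(U - a) - (1/\<mu>)/U"
    have Bn: "B < 0" using bracket_neg[OF assms(3,4,1) Uc] by (simp add: B_def a_def)
    have Yn: "Y U < 0" using neg Ua by simp
    have ic: "isCont (Usp \<gamma> \<mu> K) (Y U)"
    proof -
      have h1: "Usp \<gamma> \<mu> K (Y z) = z" if "(UD+U)/2 \<le> z" "z \<le> U+1" for z
        using that U by (intro UspY) (auto simp: field_simps)
      have h2: "isCont Y z" if "(UD+U)/2 \<le> z" "z \<le> U+1" for z
        using that U cont by simp
      have h0: "(UD+U)/2 < U" "U < U+1" using U by auto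
      show ?thesis by (rule isCont_inverse_function2[OF h0 h1 h2])
    qed
    have dU: "(Usp \<gamma> \<mu> K has_real_derivative inverse (Y U * B)) (at y)"
    proof (rule DERIV_inverse_function[where f=Y and a="Y UD" and b=0])
      show "(Y has_real_derivative Y U * B) (at (Usp \<gamma> \<mu> K y))"
        using dY by (simp add: B_def U_def)
      show "Y U * B \<noteq> 0" using Bn Yn by simp
      show "Y UD < y" "y < 0" using y by auto
      show "\<And>z. Y UD < z \<Longrightarrow> z < 0 \<Longrightarrow> Y (Usp \<gamma> \<mu> K z) = z" using Usp_prop by blast
      show "isCont (Usp \<gamma> \<mu> K) y" using ic U by simp
    qed
    have gp: "\<gamma> + 1 > 0" using assms(1) by simp
    have "(\<gamma>+1) * (2/(\<gamma>+1)) < (\<gamma>+1) * U" using Uc gp by (rule mult_strict_left_mono)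
    moreover have "(\<gamma>+1) * (2/(\<gamma>+1)) = 2" using gp by (simp add: field_simps)
    ultimately have g1: "(\<gamma>+1) * U - 2 > 0" by linarith
    have e1: "y * inverse (Y U * B) = 1 / B"
    proof -
      have "y * inverse (Y U * B) = (Y U / Y U) * (1 / B)" using U by (simp add: divide_inverse)
      also have "\<dots> = 1 / B" using Yn by simp
      finally show ?thesis .
    qed
    have "B = (a/\<mu> - U)/(U*(U-a))"
      unfolding B_def using Ua assms(3) by (simp add: field_simps)
    also have "a/\<mu> = 2/(\<gamma>+1)" using assms(3) by (simp add: a_def)
    also have "U - a = ((\<gamma>+1)*U - 2*\<mu>)/(\<gamma>+1)" using gp by (simp add: a_def diff_divide_distrib)
    also have "2/(\<gamma>+1) - U = - ((\<gamma>+1)*U - 2)/(\<gamma>+1)" using gp by (simp add: diff_divide_distrib)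
    finally have Bf: "B = - ((\<gamma>+1)*U - 2)/(\<gamma>+1) / (U * (((\<gamma>+1)*U - 2*\<mu>)/(\<gamma>+1)))" .
    have e2: "1 / B = - (((\<gamma> + 1) * U - 2 * \<mu>) * U) / ((\<gamma> + 1) * U - 2)"
      unfolding Bf using gp g1 by (simp add: divide_simps) (simp add: algebra_simps)
    have eq: "y * inverse (Y U * B) = - (((\<gamma> + 1) * U - 2 * \<mu>) * U) / ((\<gamma> + 1) * U - 2)"
      using e1 e2 by simp
    show "\<exists>D. (Usp \<gamma> \<mu> K has_real_derivative D) (at y) \<and>
                y * D = - (((\<gamma> + 1) * Usp \<gamma> \<mu> K y - 2 * \<mu>) * Usp \<gamma> \<mu> K y)
                         / ((\<gamma> + 1) * Usp \<gamma> \<mu> K y - 2)"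
      using dU eq unfolding U_def by blast
  qed
  have P4: "((\<lambda>y. y * Usp \<gamma> \<mu> K y) \<longlongrightarrow> - K) (at_left 0)"
  proof -
    have top: "filterlim (Usp \<gamma> \<mu> K) at_top (at_left 0)"
    proof (subst filterlim_at_top, intro allI)
      fix Z
      define W where "W = max Z (UD+1)"
      have W: "W > UD" "W \<ge> Z" by (auto simp: W_def)
      have "Y W < 0" using neg W UDa by simp
      hence "eventually (\<lambda>y. y \<in> {Y W<..<0}) (at_left (0::real))"
        by (rule eventually_at_left_real)
      thus "eventually (\<lambda>y. Z \<le> Usp \<gamma> \<mu> K y) (at_left 0)"
      proof eventually_elim
        case (elim y)
        hence y: "Y UD < y" "y < 0" using mono[of UD W] W by auto
        have p: "Usp \<gamma> \<mu> K y > UD" "Y (Usp \<gamma> \<mu> K y) = y" using Usp_prop[OF y] by auto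
        have "Usp \<gamma> \<mu> K y > W" by (rule monole) (use p W elim in auto)
        thus ?case using W by simp
      qed
    qed
    have "((\<lambda>y. Y (Usp \<gamma> \<mu> K y) * Usp \<gamma> \<mu> K y) \<longlongrightarrow> - K) (at_left 0)"
      using filterlim_compose[OF lim1 top] by simp
    moreover have "eventually (\<lambda>y. Y (Usp \<gamma> \<mu> K y) * Usp \<gamma> \<mu> K y = y * Usp \<gamma> \<mu> K y) (at_left (0::real))"
      using eventually_at_left_real[of "Y UD" 0] P1 yD
    proof -
      have "eventually (\<lambda>y. y \<in> {Y UD<..<0}) (at_left (0::real))"
        using eventually_at_left_real P1 yD by simp
      thus ?thesis
      proof eventually_elim
        case (elim y)
        hence "Y (Usp \<gamma> \<mu> K y) = y" using Usp_prop[of y] by auto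
        thus ?case by simp
      qed
    qed
    ultimately show ?thesis by (rule Lim_transform_eventually)
  qed
  show ?thesis using P1 P2 P3 P4 P5 by blast
qed

end
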